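(* Fix integers $t\ge1$, $C_1,\dots,C_t\ge 1$, $A_1,\dots,A_t$ and $B_1,\dots,B_t$ with $0\le A_i\le C_i/2$ and $0\le B_i\le C_i/2$ for all $i$, and $m\ge 0$, $N_0\ge 1$. Let $S$ (resp. $T$) be the multiset of positive integers containing, for each $i=1,\dots,t$, one copy of each positive integer congruent to $A_i$ (resp. $B_i$) modulo $C_i$ and, separately, one copy of each positive integer congruent to $-A_i$ (resp. $-B_i$) modulo $C_i$, all copies regarded as distinct elements (so a residue class with $A_i\equiv -A_i$, resp. $B_i\equiv -B_i$, modulo $C_i$ contributes two copies). Let $D_S(N)$ (resp. $D_T(N)$) be the number of partitions of $N$ into distinct elements of $S$ (resp. $T$), where, if no $A_i$ (resp. no $B_i$) equals $0$, only partitions with an odd number of parts are counted. Let $z_A$, $z_B$ be the numbers of indices $i$ with $A_i=0$, resp. $B_i=0$, and set $p=\max(z_B,1)-\max(z_A,1)$. Then the following are equivalent: (i) For every $N\ge N_0$, the number of tuples $(\mu_1,\dots,\mu_t;d_1,\dots,d_t)\in P^t\times\mathbb Z^t$ with $\sum_i d_i$ odd and $\sum_{i}C_i|\mu_i|+\sum_i C_i\binom{d_i}{2}+\sum_i A_id_i=N$ equals the number of tuples $(\alpha_1,\dots,\alpha_t;e_1,\dots,e_t)\in P^t\times\mathbb Z^t$ with $\sum_i e_i$ odd and $\sum_i C_i|\alpha_i|+\sum_i C_i\binom{e_i}{2}+\sum_i B_ie_i+m=N$. (ii) For every $N\ge N_0$, $D_S(N)=2^{p}\cdot D_T(N-m)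$.
   Context: $P$ denotes the set of all integer partitions into positive parts (including the empty partition $\emptyset$, the unique partition of $0$); for a partition $\lambda$, $|\lambda|$ is the sum of its parts. For $d\in\mathbb Z$, $\binom{d}{2}=d(d-1)/2$. A partition of $N$ into distinct elements of a multiset $S$ is a finite set of distinct elements of $S$ (distinct copies of the same integer count as distinct elements) whose values sum to $N$; $D_T(n)=0$ for $n<0$. *)

theory Defs
  imports Complex_Main "HOL-Library.Multiset"
begin

text \<open>Integer partitions (the set P): multisets of positive naturals; size = sum of parts.\<close>
definition is_partition :: "nat multiset \<Rightarrow> bool" where
  "is_partition \<mu> \<longleftrightarrow> 0 \<notin># \<mu>"

definition binom2 :: "int \<Rightarrow> int" where
  "binom2 d = d * (d - 1) div 2"

definition tuple_count :: "nat \<Rightarrow> (nat \<Rightarrow> int) \<Rightarrow> (nat \<Rightarrow> int) \<Rightarrow> int \<Rightarrow> nat" where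
  "tuple_count t C A N = card {(\<mu> :: nat \<Rightarrow> nat multiset, d :: nat \<Rightarrow> int).
      (\<forall>i. t \<le> i \<longrightarrow> \<mu> i = {#} \<and> d i = 0) \<and>
      (\<forall>i<t. is_partition (\<mu> i)) \<and>
      odd (\<Sum>i<t. d i) \<and>
      (\<Sum>i<t. C i * int (sum_mset (\<mu> i))) + (\<Sum>i<t. C i * binom2 (d i)) + (\<Sum>i<t. A i * d i) = N}"

text \<open>The multiset S built from (C_i, A_i): its elements are triples (i, s, n) with i < t,
  n a positive integer, n = A_i mod C_i if s, and n = -A_i mod C_i if not s.
  The value of element (i, s, n) is n.  Distinct triples are distinct copies.\<close>
definition res_mset :: "nat \<Rightarrow> (nat \<Rightarrow> int) \<Rightarrow> (nat \<Rightarrow> int) \<Rightarrow> (nat \<times> bool \<times> nat) set" where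
  "res_mset t C A = {(i, s, n). i < t \<and> 0 < n \<and>
      (if s then int n mod C i = A i mod C i else int n mod C i = (- A i) mod C i)}"

definition D_count :: "nat \<Rightarrow> (nat \<Rightarrow> int) \<Rightarrow> (nat \<Rightarrow> int) \<Rightarrow> int \<Rightarrow> nat" where
  "D_count t C A N = card {X. X \<subseteq> res_mset t C A \<and> finite X \<and>
      int (\<Sum>x\<in>X. snd (snd x)) = N \<and>
      ((\<forall>i<t. A i \<noteq> 0) \<longrightarrow> odd (card X))}"

definition zero_count :: "nat \<Rightarrow> (nat \<Rightarrow> int) \<Rightarrow> nat" where
  "zero_count t A = card {i. i < t \<and> A i = 0}"

end

theory Submission
  imports Defs "HOL-Library.Equipollence"
begin

definition Gs :: "nat \<Rightarrow> nat \<Rightarrow> nat \<Rightarrow> nat multiset set" where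
 "Gs a b M = {\<mu>. 0 \<notin># \<mu> \<and> (\<forall>x\<in>#\<mu>. x \<le> a) \<and> size \<mu> \<le> b \<and> sum_mset \<mu> = M}"
definition Hs :: "nat \<Rightarrow> nat \<Rightarrow> nat \<Rightarrow> (nat set \<times> nat set) set" where
 "Hs a b M = {(X,Y). X \<subseteq> {..<a} \<and> Y \<subseteq> {1..b} \<and> card X = card Y \<and> \<Sum>X + \<Sum>Y = M}"
definition hookG :: "nat \<Rightarrow> nat \<Rightarrow> nat multiset \<Rightarrow> nat multiset" where
 "hookG a' b' \<mu> = add_mset (Suc a') (image_mset Suc \<mu> + replicate_mset (b' - size \<mu>) 1)"
definition hookH :: "nat \<Rightarrow> nat \<Rightarrow> nat set \<times> nat set \<Rightarrow> nat set \<times> nat set" where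
 "hookH a' b' = (\<lambda>(X,Y). (insert a' X, insert (Suc b') Y))"
definition Ix :: "nat \<Rightarrow> nat \<Rightarrow> nat \<Rightarrow> (nat \<times> nat) set" where
 "Ix a b M = {(a',b'). a' < a \<and> b' < b \<and> a' + b' + 1 \<le> M}"

lemma sum_mset_image_Suc: "sum_mset (image_mset Suc \<mu>) = sum_mset \<mu> + size \<mu>"
  by (induction \<mu>) auto

lemma sum_mset_rep1: "sum_mset (replicate_mset n (1::nat)) = n"
  by (induction n) auto

lemma hookG_in:
  assumes "\<mu> \<in> Gs a' b' (M - a' - b' - 1)" "(a',b') \<in> Ix a b M"
  shows "hookG a' b' \<mu> \<in> Gs a b M"
  using assms unfolding Gs_def Ix_def hookG_def
  by (auto simp: sum_mset_image_Suc sum_mset_rep1)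

lemma mset_split1: "0 \<notin># (R::nat multiset) \<Longrightarrow> R = filter_mset (\<lambda>x. 2 \<le> x) R + replicate_mset (count R 1) 1"
proof (induction R)
  case empty then show ?case by simp
next
  case (add x R)
  then have "x \<noteq> 0" "0 \<notin># R" by auto
  with add show ?case
    by (cases "x = 1") (auto simp: add_mset_commute)
qed

lemma image_Suc_pred: "(\<forall>x\<in>#F. 1 \<le> x) \<Longrightarrow> image_mset Suc (image_mset (\<lambda>x. x - 1) F) = F"
  by (induction F) auto

lemma hookG_surj:
  assumes "L \<in> Gs a b M" "L \<noteq> {#}"
  shows "\<exists>p\<in>Ix a b M. \<exists>\<mu>\<in>Gs (fst p) (snd p) (M - fst p - snd p - 1). L = hookG (fst p) (snd p) \<mu>"
proof -
  define m where "m = Max_mset L"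
  have mi: "m \<in># L" using assms(2) unfolding m_def by simp
  have z: "0 \<notin># L" and le: "\<forall>x\<in>#L. x \<le> a" and sz: "size L \<le> b" and sm: "sum_mset L = M"
    using assms(1) unfolding Gs_def by auto
  have mpos: "m \<ge> 1" using mi z by (cases m) auto
  have xm: "\<forall>x\<in>#L. x \<le> m" unfolding m_def by simp
  define R where "R = L - {#m#}"
  have lam: "L = add_mset m R" using mi unfolding R_def by simp
  have zR: "0 \<notin># R" using z lam by auto
  define F where "F = filter_mset (%x. 2 \<le> x) R"
  define \<mu> where "\<mu> = image_mset (%x. x - 1) F"
  have RF: "R = F + replicate_mset (count R 1) 1" using mset_split1[OF zR] unfolding F_def .
  have F1: "\<forall>x\<in>#F. 1 \<le> x" unfolding F_def by auto
  have SF: "image_mset Suc \<mu> = F" unfolding \<mu>_def using image_Suc_pred[OF F1] .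
  have szR: "size R = size \<mu> + count R 1" using RF unfolding \<mu>_def
    by (metis size_image_mset size_replicate_mset size_union)
  define a' where "a' = m - 1"
  define b' where "b' = size L - 1"
  have szl: "size L = Suc (size R)" using lam by simp
  have hk: "hookG a' b' \<mu> = L"
    unfolding hookG_def SF a'_def b'_def using mpos szR szl lam RF by simp
  have ma: "m \<le> a" using le mi by auto
  have sumR: "sum_mset L = m + sum_mset \<mu> + size \<mu> + count R 1"
    using lam RF SF sum_mset_image_Suc[of \<mu>] sum_mset_rep1[of "count R 1"]
    by (metis add.assoc sum_mset.add_mset sum_mset.union)
  have "(a',b') \<in> Ix a b M"
    unfolding Ix_def a'_def b'_def using ma mpos sz szl sm sumR szR by auto
  moreover have "\<mu> \<in> Gs a' b' (M - a' - b' - 1)"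
  proof -
    have "0 \<notin># \<mu>" unfolding \<mu>_def F_def by auto
    moreover have "\<forall>x\<in>#\<mu>. x \<le> a'"
    proof
      fix x assume "x \<in># \<mu>"
      then obtain y where "y \<in># F" "x = y - 1" unfolding \<mu>_def by auto
      then have "y \<in># L" unfolding F_def using lam by auto
      then show "x \<le> a'" using xm \<open>x = y - 1\<close> unfolding a'_def by auto
    qed
    moreover have "size \<mu> \<le> b'" using szR szl unfolding b'_def by simp
    moreover have "sum_mset \<mu> = M - a' - b' - 1"
      using sumR sm szR szl mpos unfolding a'_def b'_def by simp
    ultimately show ?thesis unfolding Gs_def by simp
  qed
  ultimately show ?thesis using hk by force
qed

lemma hookH_in:
  assumes "q \<in> Hs a' b' (M - a' - b' - 1)" "(a',b') \<in> Ix a b M"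
  shows "hookH a' b' q \<in> Hs a b M"
proof -
  obtain X Y where q: "q = (X,Y)" by force
  have X: "X \<subseteq> {..<a'}" and Y: "Y \<subseteq> {1..b'}" and c: "card X = card Y"
    and s: "\<Sum>X + \<Sum>Y = M - a' - b' - 1" using assms(1) unfolding q Hs_def by auto
  have fX: "finite X" using X finite_subset by blast
  have fY: "finite Y" using Y finite_subset by blast
  have nX: "a' \<notin> X" using X by auto
  have nY: "Suc b' \<notin> Y" using Y by auto
  have I: "a' < a" "b' < b" "a' + b' + 1 \<le> M" using assms(2) unfolding Ix_def by auto
  show ?thesis unfolding q hookH_def Hs_def using X Y c s fX fY nX nY I
    by (auto simp: card_insert_if)
qed

lemma hookH_surj:
  assumes "q \<in> Hs a b M" "q \<noteq> ({},{})"
  shows "\<exists>p\<in>Ix a b M. \<exists>r\<in>Hs (fst p) (snd p) (M - fst p - snd p - 1). q = hookH (fst p) (snd p) r"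
proof -
  obtain X Y where q: "q = (X,Y)" by force
  have X: "X \<subseteq> {..<a}" and Y: "Y \<subseteq> {1..b}" and c: "card X = card Y"
    and s: "\<Sum>X + \<Sum>Y = M" using assms(1) unfolding q Hs_def by auto
  have fX: "finite X" using X finite_subset by blast
  have fY: "finite Y" using Y finite_subset by blast
  have ne: "X \<noteq> {}" "Y \<noteq> {}" using assms(2) c fX fY unfolding q by auto
  define x where "x = Max X"
  define y where "y = Max Y"
  have xX: "x \<in> X" unfolding x_def using fX ne by simp
  have yY: "y \<in> Y" unfolding y_def using fY ne by simp
  have y1: "y \<ge> 1" using yY Y by auto
  have xa: "x < a" using xX X by auto
  have yb: "y \<le> b" using yY Y by auto
  define X' where "X' = X - {x}"
  define Y' where "Y' = Y - {y}"
  have X': "X' \<subseteq> {..<x}"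
  proof
    fix z assume "z \<in> X'"
    then have "z \<in> X" "z \<noteq> x" unfolding X'_def by auto
    then have "z \<le> x" unfolding x_def using fX by simp
    with \<open>z \<noteq> x\<close> show "z \<in> {..<x}" by simp
  qed
  have Y': "Y' \<subseteq> {1..y - 1}"
  proof
    fix z assume "z \<in> Y'"
    then have "z \<in> Y" "z \<noteq> y" unfolding Y'_def by auto
    then have "z \<le> y" "z \<ge> 1" unfolding y_def using fY Y by auto
    with \<open>z \<noteq> y\<close> show "z \<in> {1..y - 1}" by simp
  qed
  have cX: "card X = Suc (card X')" unfolding X'_def using fX xX by (metis card_Suc_Diff1)
  have cY: "card Y = Suc (card Y')" unfolding Y'_def using fY yY by (metis card_Suc_Diff1)
  have sX: "\<Sum>X = x + \<Sum>X'" unfolding X'_def using fX xX by (simp add: sum.remove)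
  have sY: "\<Sum>Y = y + \<Sum>Y'" unfolding Y'_def using fY yY by (simp add: sum.remove)
  have "(x, y - 1) \<in> Ix a b M" unfolding Ix_def using xa yb y1 s sX sY by auto
  moreover have "(X',Y') \<in> Hs x (y - 1) (M - x - (y - 1) - 1)"
    unfolding Hs_def using X' Y' cX cY c s sX sY y1 by auto
  moreover have "q = hookH x (y - 1) (X',Y')"
    unfolding q hookH_def X'_def Y'_def using xX yY y1 by auto
  ultimately show ?thesis by force
qed

lemma hookG_inj: "inj_on (hookG a' b') (Gs a' b' K)"
proof (rule inj_onI)
  fix m1 m2 assume m1: "m1 \<in> Gs a' b' K" and m2: "m2 \<in> Gs a' b' K" and e: "hookG a' b' m1 = hookG a' b' m2"
  have z1: "0 \<notin># m1" and z2: "0 \<notin># m2" using m1 m2 unfolding Gs_def by auto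
  have f: "filter_mset (\<lambda>x. 2 \<le> x) (image_mset Suc m + replicate_mset n 1) = image_mset Suc m" if "0 \<notin># m" for m :: "nat multiset" and n
  proof -
    have "filter_mset (\<lambda>x. 2 \<le> x) (image_mset Suc m) = image_mset Suc m"
      using that by (induction m) auto
    moreover have "filter_mset (\<lambda>x. 2 \<le> x) (replicate_mset n (1::nat)) = {#}"
      by (induction n) auto
    ultimately show ?thesis by simp
  qed
  from e have "image_mset Suc m1 + replicate_mset (b' - size m1) 1 = image_mset Suc m2 + replicate_mset (b' - size m2) 1"
    unfolding hookG_def by simp
  then have "image_mset Suc m1 = image_mset Suc m2" using f[OF z1] f[OF z2] by metis
  then have "image_mset (\<lambda>x. x - 1) (image_mset Suc m1) = image_mset (\<lambda>x. x - 1) (image_mset Suc m2)" by simp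
  then show "m1 = m2" by (simp add: image_mset.compositionality comp_def)
qed

lemma hookH_inj: "inj_on (hookH a' b') (Hs a' b' K)"
proof (rule inj_onI)
  fix q1 q2 assume q1: "q1 \<in> Hs a' b' K" and q2: "q2 \<in> Hs a' b' K" and e: "hookH a' b' q1 = hookH a' b' q2"
  obtain X1 Y1 where 1: "q1 = (X1,Y1)" by force
  obtain X2 Y2 where 2: "q2 = (X2,Y2)" by force
  have "a' \<notin> X1" "a' \<notin> X2" "Suc b' \<notin> Y1" "Suc b' \<notin> Y2" using q1 q2 unfolding 1 2 Hs_def by auto
  with e show "q1 = q2" unfolding 1 2 hookH_def
    by (auto) (metis insert_ident)+
qed

lemma hookG_key:
  assumes "\<mu> \<in> Gs a' b' K"
  shows "Max_mset (hookG a' b' \<mu>) = Suc a' \<and> size (hookG a' b' \<mu>) = Suc b'"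
proof -
  have le: "\<forall>x\<in>#\<mu>. x \<le> a'" and sz: "size \<mu> \<le> b'" using assms unfolding Gs_def by auto
  have "\<forall>x\<in># hookG a' b' \<mu>. x \<le> Suc a'" using le unfolding hookG_def by auto
  moreover have "Suc a' \<in># hookG a' b' \<mu>" unfolding hookG_def by simp
  ultimately have "Max_mset (hookG a' b' \<mu>) = Suc a'"
    by (intro Max_eqI) auto
  moreover have "size (hookG a' b' \<mu>) = Suc b'" unfolding hookG_def using sz by simp
  ultimately show ?thesis by simp
qed

lemma hookH_key:
  assumes "q \<in> Hs a' b' K"
  shows "Max (fst (hookH a' b' q)) = a' \<and> Max (snd (hookH a' b' q)) = Suc b'"
proof -
  obtain X Y where q: "q = (X,Y)" by force
  have X: "X \<subseteq> {..<a'}" and Y: "Y \<subseteq> {1..b'}" using assms unfolding q Hs_def by auto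
  have fX: "finite X" using X finite_subset by blast
  have fY: "finite Y" using Y finite_subset by blast
  show ?thesis unfolding q hookH_def using X Y fX fY
    by (auto intro!: Max_eqI)
qed

lemma G_decomp: "Gs a b M = (if M = 0 then {{#}} else {}) \<union>
   (\<Union>p\<in>Ix a b M. hookG (fst p) (snd p) ` Gs (fst p) (snd p) (M - fst p - snd p - 1))"
proof (rule set_eqI, rule iffI)
  fix L assume L: "L \<in> Gs a b M"
  show "L \<in> (if M = 0 then {{#}} else {}) \<union>
   (\<Union>p\<in>Ix a b M. hookG (fst p) (snd p) ` Gs (fst p) (snd p) (M - fst p - snd p - 1))"
  proof (cases "L = {#}")
    case True then show ?thesis using L unfolding Gs_def by auto
  next
    case False then show ?thesis using hookG_surj[OF L] by blast
  qed
next
  fix L assume "L \<in> (if M = 0 then {{#}} else {}) \<union>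
   (\<Union>p\<in>Ix a b M. hookG (fst p) (snd p) ` Gs (fst p) (snd p) (M - fst p - snd p - 1))"
  then show "L \<in> Gs a b M"
  proof
    assume "L \<in> (if M = 0 then {{#}} else {})" then show ?thesis by (cases "M = 0") (auto simp: Gs_def)
  next
    assume "L \<in> (\<Union>p\<in>Ix a b M. hookG (fst p) (snd p) ` Gs (fst p) (snd p) (M - fst p - snd p - 1))"
    then show ?thesis using hookG_in by force
  qed
qed

lemma H_decomp: "Hs a b M = (if M = 0 then {({},{})} else {}) \<union>
   (\<Union>p\<in>Ix a b M. hookH (fst p) (snd p) ` Hs (fst p) (snd p) (M - fst p - snd p - 1))"
proof (rule set_eqI, rule iffI)
  fix L assume L: "L \<in> Hs a b M"
  show "L \<in> (if M = 0 then {({},{})} else {}) \<union>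
   (\<Union>p\<in>Ix a b M. hookH (fst p) (snd p) ` Hs (fst p) (snd p) (M - fst p - snd p - 1))"
  proof (cases "L = ({},{})")
    case True then show ?thesis using L unfolding Hs_def by auto
  next
    case False then show ?thesis using hookH_surj[OF L] by blast
  qed
next
  fix L assume "L \<in> (if M = 0 then {({},{})} else {}) \<union>
   (\<Union>p\<in>Ix a b M. hookH (fst p) (snd p) ` Hs (fst p) (snd p) (M - fst p - snd p - 1))"
  then show "L \<in> Hs a b M"
  proof
    assume "L \<in> (if M = 0 then {({},{})} else {})" then show ?thesis by (cases "M = 0") (auto simp: Hs_def)
  next
    assume "L \<in> (\<Union>p\<in>Ix a b M. hookH (fst p) (snd p) ` Hs (fst p) (snd p) (M - fst p - snd p - 1))"
    then show ?thesis using hookH_in by force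
  qed
qed

lemma GH_eqpoll: "Gs a b M \<approx> Hs a b M"
proof (induction M arbitrary: a b rule: less_induct)
  case (less M)
  let ?G = "\<lambda>p. hookG (fst p) (snd p) ` Gs (fst p) (snd p) (M - fst p - snd p - 1)"
  let ?H = "\<lambda>p. hookH (fst p) (snd p) ` Hs (fst p) (snd p) (M - fst p - snd p - 1)"
  have pieces: "?G p \<approx> ?H p" if "p \<in> Ix a b M" for p
  proof -
    have lt: "M - fst p - snd p - 1 < M" using that unfolding Ix_def by auto
    have "?G p \<approx> Gs (fst p) (snd p) (M - fst p - snd p - 1)"
      using hookG_inj inj_on_image_eqpoll_self by blast
    also have "\<dots> \<approx> Hs (fst p) (snd p) (M - fst p - snd p - 1)" using less lt by blast
    also have "\<dots> \<approx> ?H p"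
      using hookH_inj inj_on_image_eqpoll_self eqpoll_sym by blast
    finally show ?thesis .
  qed
  have dG: "pairwise (\<lambda>x y. disjnt (?G x) (?G y)) (Ix a b M)"
    unfolding pairwise_def disjnt_def
    by (auto dest!: hookG_key)
  have dH: "pairwise (\<lambda>x y. disjnt (?H x) (?H y)) (Ix a b M)"
    unfolding pairwise_def disjnt_def
    by (auto dest!: hookH_key)
  have U: "(\<Union>p\<in>Ix a b M. ?G p) \<approx> (\<Union>p\<in>Ix a b M. ?H p)"
    by (rule UN_eqpoll_UN[OF pieces dG dH])
  have E: "(if M = 0 then {{#}} else {}) \<approx> (if M = 0 then {({},{})} else ({}::(nat set \<times> nat set) set))"
    by (simp add: singleton_eqpoll)
  have d1: "disjnt (if M = 0 then {{#}} else {}) (\<Union>p\<in>Ix a b M. ?G p)"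
    unfolding disjnt_def hookG_def by auto
  have d2: "disjnt (if M = 0 then {({},{})} else {}) (\<Union>p\<in>Ix a b M. ?H p)"
    unfolding disjnt_def hookH_def by auto
  show ?case
    unfolding G_decomp[of a b M] H_decomp[of a b M]
    by (rule Un_eqpoll_cong[OF E U d1 d2])
qed

declare of_nat_sum[simp del] of_nat_sum_mset[simp del]

definition XYd :: "int \<Rightarrow> int \<Rightarrow> (nat set \<times> nat set) set" where
 "XYd d M = {(X,Y). finite X \<and> finite Y \<and> 0 \<notin> Y \<and> int (card X) - int (card Y) = d \<and> int (\<Sum>X + \<Sum>Y) = M}"
definition Pt :: "int \<Rightarrow> nat multiset set" where
 "Pt n = {\<mu>. is_partition \<mu> \<and> int (sum_mset \<mu>) = n}"

lemma mset_le_sum: "x \<in># (\<mu>::nat multiset) \<Longrightarrow> x \<le> sum_mset \<mu>"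
  by (metis le_add1 multi_member_split sum_mset.add_mset)

lemma size_le_sum: "0 \<notin># (\<mu>::nat multiset) \<Longrightarrow> size \<mu> \<le> sum_mset \<mu>"
proof (induction \<mu>)
  case empty then show ?case by simp
next
  case (add x \<mu>) then show ?case by (cases x) auto
qed

lemma Pt_eq: "Pt (int K) = Gs (Suc K) K K"
  unfolding Pt_def Gs_def is_partition_def
  using mset_le_sum size_le_sum by (auto simp: le_imp_less_Suc) (meson le_SucI)

lemma XY0_eq: "XYd 0 (int K) = Hs (Suc K) K K"
proof (rule set_eqI, rule iffI)
  fix q assume q: "q \<in> XYd 0 (int K)"
  obtain X Y where qq: "q = (X,Y)" by force
  have f: "finite X" "finite Y" "0 \<notin> Y" "card X = card Y" "\<Sum>X + \<Sum>Y = K"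
    using q unfolding qq XYd_def by auto
  have "X \<subseteq> {..<Suc K}"
  proof
    fix x assume "x \<in> X" then have "x \<le> \<Sum>X" using f(1) by (meson sum_nonneg_leq_bound zero_le)
    then show "x \<in> {..<Suc K}" using f(5) by simp
  qed
  moreover have "Y \<subseteq> {1..K}"
  proof
    fix x assume x: "x \<in> Y" then have "x \<le> \<Sum>Y" using f(2) by (meson sum_nonneg_leq_bound zero_le)
    then show "x \<in> {1..K}" using f(5) f(3) x by (cases x) auto
  qed
  ultimately show "q \<in> Hs (Suc K) K K" unfolding qq Hs_def using f by auto
next
  fix q assume q: "q \<in> Hs (Suc K) K K"
  obtain X Y where qq: "q = (X,Y)" by force
  have X: "X \<subseteq> {..<Suc K}" and Y: "Y \<subseteq> {1..K}" and c: "card X = card Y"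
    and s: "\<Sum>X + \<Sum>Y = K" using q unfolding qq Hs_def by auto
  have "finite X" using X finite_subset by blast
  moreover have "finite Y" using Y finite_subset by blast
  moreover have "0 \<notin> Y" using Y by auto
  ultimately show "q \<in> XYd 0 (int K)" unfolding qq XYd_def using c s by auto
qed

lemma Pt_XY0: "Pt M \<approx> XYd 0 M"
proof (cases "M < 0")
  case True
  then have "Pt M = {}" "XYd 0 M = {}" unfolding Pt_def XYd_def by auto
  then show ?thesis by simp
next
  case False
  then obtain K where "M = int K" by (metis nonneg_int_cases not_less)
  then show ?thesis using Pt_eq XY0_eq GH_eqpoll by simp
qed

definition sh :: "nat set \<times> nat set \<Rightarrow> nat set \<times> nat set" where
 "sh = (\<lambda>(X,Y). (Suc ` X \<union> (if 1 \<in> Y then {} else {0}), (\<lambda>y. y - 1) ` (Y - {1})))"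
definition ush :: "nat set \<times> nat set \<Rightarrow> nat set \<times> nat set" where
 "ush = (\<lambda>(X,Y). ((\<lambda>x. x - 1) ` (X - {0}), Suc ` Y \<union> (if 0 \<in> X then {} else {1})))"

lemma sh_in:
  assumes "q \<in> XYd d M" shows "sh q \<in> XYd (d+1) (M+d)"
proof -
  obtain X Y where qq: "q = (X,Y)" by force
  have f: "finite X" "finite Y" "0 \<notin> Y" "int (card X) - int (card Y) = d" "int (\<Sum>X + \<Sum>Y) = M"
    using assms unfolding qq XYd_def by auto
  define Y1 where "Y1 = Y - {1}"
  have Y1: "\<forall>y\<in>Y1. y \<ge> 2" using f(3) unfolding Y1_def by (auto, metis One_nat_def Suc_1 Suc_leI less_one linorder_neqE_nat not_less_eq)
  have injY: "inj_on (\<lambda>y. y - 1) Y1"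
  proof (rule inj_onI)
    fix u w assume "u \<in> Y1" "w \<in> Y1" "u - 1 = w - 1"
    moreover have "1 \<le> u" "1 \<le> w" using Y1 \<open>u \<in> Y1\<close> \<open>w \<in> Y1\<close> by auto
    ultimately show "u = w" by arith
  qed
  have fY1: "finite Y1" using f(2) unfolding Y1_def by simp
  have cY1: "card ((\<lambda>y. y - 1) ` Y1) = card Y1" using card_image[OF injY] .
  have sY1: "int (\<Sum>((\<lambda>y. y - 1) ` Y1)) = int (\<Sum>Y1) - int (card Y1)"
  proof -
    have "\<Sum>((\<lambda>y. y - 1) ` Y1) = (\<Sum>y\<in>Y1. y - 1)" using sum.reindex[OF injY] by simp
    then have "int (\<Sum>((\<lambda>y. y - 1) ` Y1)) = (\<Sum>y\<in>Y1. int (y - 1))"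
      by (simp add: of_nat_sum)
    also have "\<dots> = (\<Sum>y\<in>Y1. int y - 1)"
      by (rule sum.cong) (use Y1 in \<open>auto simp: of_nat_diff\<close>)
    finally have "int (\<Sum>((\<lambda>y. y - 1) ` Y1)) = (\<Sum>y\<in>Y1. int y - 1)" .
    also have "\<dots> = int (\<Sum>Y1) - int (card Y1)" by (simp add: sum_subtractf of_nat_sum)
    finally show ?thesis .
  qed
  have 0: "0 \<notin> Suc ` X" by auto
  have cX: "card (Suc ` X) = card X" by (simp add: card_image)
  have sX: "\<Sum>(Suc ` X) = \<Sum>X + card X" by (simp add: sum.reindex, induct X rule: infinite_finite_induct, auto)
  show ?thesis
  proof (cases "1 \<in> Y")
    case True
    have cY: "card Y = Suc (card Y1)" unfolding Y1_def using True f(2) by (metis card_Suc_Diff1)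
    have sY: "\<Sum>Y = 1 + \<Sum>Y1" unfolding Y1_def using True f(2) by (simp add: sum.remove)
    have "sh q = (Suc ` X, (\<lambda>y. y - 1) ` Y1)" unfolding qq sh_def Y1_def using True by simp
    moreover have "0 \<notin> (\<lambda>y. y - 1) ` Y1" using Y1 by force
    ultimately show ?thesis unfolding XYd_def using f fY1 cY1 cX sX cY sY sY1
      by (auto simp: of_nat_add)
  next
    case False
    have Y1Y: "Y1 = Y" unfolding Y1_def using False by simp
    have "sh q = (insert 0 (Suc ` X), (\<lambda>y. y - 1) ` Y1)" unfolding qq sh_def Y1_def using False by simp
    moreover have "0 \<notin> (\<lambda>y. y - 1) ` Y1" using Y1 by force
    moreover have "card (insert 0 (Suc ` X)) = Suc (card X)" using 0 cX f(1) by simp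
    moreover have "\<Sum>(insert 0 (Suc ` X)) = \<Sum>X + card X" using 0 sX f(1) by simp
    ultimately show ?thesis unfolding XYd_def using f fY1 cY1 sY1 Y1Y
      by (auto simp: of_nat_add)
  qed
qed

lemma ush_in:
  assumes "q \<in> XYd (d+1) (M+d)" shows "ush q \<in> XYd d M"
proof -
  obtain X Y where qq: "q = (X,Y)" by force
  have f: "finite X" "finite Y" "0 \<notin> Y" "int (card X) - int (card Y) = d + 1" "int (\<Sum>X + \<Sum>Y) = M + d"
    using assms unfolding qq XYd_def by auto
  define X1 where "X1 = X - {0}"
  have X1: "\<forall>x\<in>X1. x \<ge> 1" unfolding X1_def by auto
  have injX: "inj_on (\<lambda>x. x - 1) X1"
  proof (rule inj_onI)
    fix u w assume "u \<in> X1" "w \<in> X1" "u - 1 = w - 1"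
    moreover have "1 \<le> u" "1 \<le> w" using X1 \<open>u \<in> X1\<close> \<open>w \<in> X1\<close> by auto
    ultimately show "u = w" by arith
  qed
  have fX1: "finite X1" using f(1) unfolding X1_def by simp
  have cX1: "card ((\<lambda>x. x - 1) ` X1) = card X1" using card_image[OF injX] .
  have sX1: "int (\<Sum>((\<lambda>x. x - 1) ` X1)) = int (\<Sum>X1) - int (card X1)"
  proof -
    have "\<Sum>((\<lambda>x. x - 1) ` X1) = (\<Sum>x\<in>X1. x - 1)" using sum.reindex[OF injX] by simp
    then have "int (\<Sum>((\<lambda>x. x - 1) ` X1)) = (\<Sum>x\<in>X1. int (x - 1))"
      by (simp add: of_nat_sum)
    also have "\<dots> = (\<Sum>x\<in>X1. int x - 1)"
      by (rule sum.cong) (use X1 in \<open>auto simp: of_nat_diff\<close>)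
    finally have "int (\<Sum>((\<lambda>x. x - 1) ` X1)) = (\<Sum>x\<in>X1. int x - 1)" .
    also have "\<dots> = int (\<Sum>X1) - int (card X1)" by (simp add: sum_subtractf of_nat_sum)
    finally show ?thesis .
  qed
  have sX1X: "\<Sum>X1 = \<Sum>X" unfolding X1_def using f(1) by (metis Diff_empty Diff_insert0 add_0 sum.remove)
  have 1: "1 \<notin> Suc ` Y" using f(3) by auto
  have cY: "card (Suc ` Y) = card Y" by (simp add: card_image)
  have sY: "\<Sum>(Suc ` Y) = \<Sum>Y + card Y" by (simp add: sum.reindex, induct Y rule: infinite_finite_induct, auto)
  have n0: "0 \<notin> Suc ` Y" by auto
  show ?thesis
  proof (cases "0 \<in> X")
    case True
    have cX: "card X = Suc (card X1)" unfolding X1_def using True f(1) by (metis card_Suc_Diff1)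
    have "ush q = ((\<lambda>x. x - 1) ` X1, Suc ` Y)" unfolding qq ush_def X1_def using True by simp
    then show ?thesis unfolding XYd_def using f fX1 cX1 cY sY cX sX1 sX1X n0
      by (auto simp: of_nat_add)
  next
    case False
    have X1X: "X1 = X" unfolding X1_def using False by simp
    have "ush q = ((\<lambda>x. x - 1) ` X1, insert 1 (Suc ` Y))" unfolding qq ush_def X1_def using False by simp
    moreover have "card (insert 1 (Suc ` Y)) = Suc (card Y)" using 1 cY f(2) by simp
    moreover have "\<Sum>(insert 1 (Suc ` Y)) = 1 + \<Sum>Y + card Y" using 1 sY f(2) by simp
    ultimately show ?thesis unfolding XYd_def using f fX1 cX1 sX1 X1X n0
      by (auto simp: of_nat_add)
  qed
qed

lemma img_pred_Suc: "(\<lambda>x. x - 1) ` (Suc ` X) = X"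
  by (simp add: image_image)

lemma img_Suc_pred: "0 \<notin> (Y::nat set) \<Longrightarrow> Suc ` ((\<lambda>y. y - 1) ` Y) = Y"
proof -
  assume a: "0 \<notin> Y"
  have "Suc ` ((\<lambda>y. y - 1) ` Y) = (\<lambda>y. Suc (y - 1)) ` Y" by (simp add: image_image)
  also have "\<dots> = (\<lambda>y. y) ` Y" proof (rule image_cong[OF refl])
    fix y :: nat assume yy: "y \<in> Y"
    show "Suc (y - 1) = y" using a yy by (cases y) auto
  qed
  finally show ?thesis by simp
qed

lemma ush_sh: "q \<in> XYd d M \<Longrightarrow> ush (sh q) = q"
proof -
  assume a: "q \<in> XYd d M"
  obtain X Y where qq: "q = (X,Y)" by force
  have f: "0 \<notin> Y" using a unfolding qq XYd_def by auto
  have "(Suc ` X \<union> (if 1 \<in> Y then {} else {0})) - {0} = Suc ` X" by auto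
  then have e1: "(\<lambda>x. x - 1) ` ((Suc ` X \<union> (if 1 \<in> Y then {} else {0})) - {0}) = X"
    using img_pred_Suc by simp
  have "0 \<notin> Y - {1}" using f by auto
  then have "Suc ` ((\<lambda>y. y - 1) ` (Y - {1})) = Y - {1}" by (rule img_Suc_pred)
  moreover have "0 \<in> Suc ` X \<union> (if 1 \<in> Y then {} else {0}) \<longleftrightarrow> 1 \<notin> Y" by auto
  ultimately have e2: "Suc ` ((\<lambda>y. y - 1) ` (Y - {1})) \<union> (if 0 \<in> Suc ` X \<union> (if 1 \<in> Y then {} else {0}) then {} else {1}) = Y"
    by auto
  show ?thesis unfolding qq sh_def ush_def using e1 e2 by simp
qed

lemma sh_ush: "q \<in> XYd (d+1) (M+d) \<Longrightarrow> sh (ush q) = q"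
proof -
  assume a: "q \<in> XYd (d+1) (M+d)"
  obtain X Y where qq: "q = (X,Y)" by force
  have f: "0 \<notin> Y" using a unfolding qq XYd_def by auto
  have "(Suc ` Y \<union> (if 0 \<in> X then {} else {1})) - {1} = Suc ` Y" using f by auto
  then have e2: "(\<lambda>y. y - 1) ` ((Suc ` Y \<union> (if 0 \<in> X then {} else {1})) - {1}) = Y"
    using img_pred_Suc by simp
  have "0 \<notin> X - {0}" by auto
  then have "Suc ` ((\<lambda>x. x - 1) ` (X - {0})) = X - {0}" by (rule img_Suc_pred)
  moreover have "1 \<in> Suc ` Y \<union> (if 0 \<in> X then {} else {1}) \<longleftrightarrow> 0 \<notin> X" using f by auto
  ultimately have e1: "Suc ` ((\<lambda>x. x - 1) ` (X - {0})) \<union> (if 1 \<in> Suc ` Y \<union> (if 0 \<in> X then {} else {1}) then {} else {0}) = X"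
    by auto
  show ?thesis unfolding qq sh_def ush_def using e1 e2 by simp
qed

lemma sh_bij: "XYd d M \<approx> XYd (d+1) (M+d)"
  unfolding eqpoll_def
  by (rule exI, rule bij_betw_byWitness[where f' = ush]) (auto intro: ush_sh sh_ush sh_in ush_in)

lemma binom2_step: "binom2 (d+1) = binom2 d + d"
proof -
  have "(d+1)*(d+1-1) = d*(d-1) + d*2" by (simp add: algebra_simps)
  then show ?thesis unfolding binom2_def by simp
qed

lemma binom2_0: "binom2 0 = 0" unfolding binom2_def by simp

lemma XY_shift: "XYd d M \<approx> XYd 0 (M - binom2 d)"
proof (induction d arbitrary: M rule: int_induct[where k = 0])
  case base then show ?case by (simp add: binom2_0)
next
  case (step1 i)
  have "XYd (i+1) M \<approx> XYd i (M - i)"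
    using sh_bij[of i "M - i"] eqpoll_sym by simp
  also have "\<dots> \<approx> XYd 0 (M - i - binom2 i)" using step1 by blast
  also have "M - i - binom2 i = M - binom2 (i+1)" using binom2_step[of i] by simp
  finally show ?case .
next
  case (step2 i)
  have "XYd (i-1) M \<approx> XYd i (M + (i - 1))"
    using sh_bij[of "i - 1" M] by simp
  also have "\<dots> \<approx> XYd 0 (M + (i - 1) - binom2 i)" using step2 by blast
  also have "M + (i - 1) - binom2 i = M - binom2 (i - 1)"
    using binom2_step[of "i - 1"] by simp
  finally show ?case .
qed

definition PDf :: "int \<Rightarrow> int \<Rightarrow> (nat multiset \<times> int) set" where
 "PDf d M = {(\<mu>, e). is_partition \<mu> \<and> e = d \<and> int (sum_mset \<mu>) + binom2 d = M}"

lemma PDf_eqpoll: "PDf d M \<approx> XYd d M"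
proof -
  have "PDf d M \<approx> Pt (M - binom2 d)"
    unfolding eqpoll_def
    by (rule exI[of _ fst], rule bij_betw_byWitness[where f' = "\<lambda>\<mu>. (\<mu>, d)"]) (auto simp: PDf_def Pt_def)
  also have "\<dots> \<approx> XYd 0 (M - binom2 d)" by (rule Pt_XY0)
  also have "\<dots> \<approx> XYd d M" using XY_shift eqpoll_sym by blast
  finally show ?thesis .
qed

definition PD :: "(nat multiset \<times> int) set" where
 "PD = {(\<mu>, d). is_partition \<mu>}"
definition XY :: "(nat set \<times> nat set) set" where
 "XY = {(X,Y). finite X \<and> finite Y \<and> 0 \<notin> Y}"
definition wt :: "nat multiset \<times> int \<Rightarrow> int" where
 "wt p = int (sum_mset (fst p)) + binom2 (snd p)"
definition FF :: "int \<Rightarrow> int \<Rightarrow> nat multiset \<times> int \<Rightarrow> nat set \<times> nat set" where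
 "FF d M = (SOME f. bij_betw f (PDf d M) (XYd d M))"
definition phi :: "nat multiset \<times> int \<Rightarrow> nat set \<times> nat set" where
 "phi p = FF (snd p) (wt p) p"

lemma FF_bij: "bij_betw (FF d M) (PDf d M) (XYd d M)"
  unfolding FF_def using PDf_eqpoll[of d M] unfolding eqpoll_def by (rule someI_ex)

lemma PD_fib: "p \<in> PD \<Longrightarrow> p \<in> PDf (snd p) (wt p)"
  unfolding PD_def PDf_def wt_def by auto

lemma phi_in: "p \<in> PD \<Longrightarrow> phi p \<in> XYd (snd p) (wt p)"
  unfolding phi_def using FF_bij PD_fib bij_betwE by blast

lemma XYd_key: "q \<in> XYd d M \<Longrightarrow> d = int (card (fst q)) - int (card (snd q)) \<and> M = int (\<Sum>(fst q) + \<Sum>(snd q))"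
  unfolding XYd_def by auto

lemma phi_bij: "bij_betw phi PD XY"
  unfolding bij_betw_def
proof (intro conjI)
  show "inj_on phi PD"
  proof (rule inj_onI)
    fix p q assume p: "p \<in> PD" and q: "q \<in> PD" and e: "phi p = phi q"
    have k: "snd p = snd q \<and> wt p = wt q"
      using XYd_key[OF phi_in[OF p]] XYd_key[OF phi_in[OF q]] e by simp
    then have "FF (snd p) (wt p) p = FF (snd p) (wt p) q" using e unfolding phi_def by simp
    moreover have "p \<in> PDf (snd p) (wt p)" "q \<in> PDf (snd p) (wt p)" using PD_fib[OF p] PD_fib[OF q] k by auto
    ultimately show "p = q" using FF_bij bij_betw_imp_inj_on inj_onD by metis
  qed
  show "phi ` PD = XY"
  proof
    show "phi ` PD \<subseteq> XY" using phi_in unfolding XYd_def XY_def by fastforce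
  next
    show "XY \<subseteq> phi ` PD"
    proof
      fix q assume q: "q \<in> XY"
      define d where "d = int (card (fst q)) - int (card (snd q))"
      define M where "M = int (\<Sum>(fst q) + \<Sum>(snd q))"
      have "q \<in> XYd d M" using q unfolding XY_def XYd_def d_def M_def by auto
      then obtain p where p: "p \<in> PDf d M" "FF d M p = q"
        using FF_bij bij_betw_imp_surj_on by (metis imageE)
      have "snd p = d" "wt p = M" "p \<in> PD" using p(1) unfolding PDf_def wt_def PD_def by auto
      then show "q \<in> phi ` PD" using p(2) unfolding phi_def by force
    qed
  qed
qed

definition Rr :: "int \<Rightarrow> int \<Rightarrow> (bool \<times> nat) set" where
 "Rr C A = {(s,n). 0 < n \<and> (if s then int n mod C = A mod C else int n mod C = (- A) mod C)}"
definition fT :: "int \<Rightarrow> int \<Rightarrow> nat \<Rightarrow> bool \<times> nat" where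
 "fT C A j = (True, nat (C * int j + A))"
definition fF :: "int \<Rightarrow> int \<Rightarrow> nat \<Rightarrow> bool \<times> nat" where
 "fF C A j = (False, nat (C * int j - A))"
definition rho :: "int \<Rightarrow> int \<Rightarrow> nat set \<times> nat set \<Rightarrow> (bool \<times> nat) set \<times> bool" where
 "rho C A = (\<lambda>(X,Y). (fT C A ` {j\<in>X. 0 < C * int j + A} \<union> fF C A ` Y, A = 0 \<and> 0 \<in> X))"
definition rinv :: "int \<Rightarrow> int \<Rightarrow> (bool \<times> nat) set \<times> bool \<Rightarrow> nat set \<times> nat set" where
 "rinv C A = (\<lambda>(V,k). ((\<lambda>n. nat (int n div C)) ` {n. (True,n) \<in> V} \<union> (if k then {0} else {}),
                        (\<lambda>n. nat ((int n + A) div C)) ` {n. (False,n) \<in> V}))"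
definition Cod :: "int \<Rightarrow> int \<Rightarrow> ((bool \<times> nat) set \<times> bool) set" where
 "Cod C A = {(V,k). finite V \<and> V \<subseteq> Rr C A \<and> (k \<longrightarrow> A = 0)}"

context
  fixes C A :: int
  assumes C1: "1 \<le> C" and A0: "0 \<le> A" and A2: "2 * A \<le> C"
begin

lemma AC: "A < C" using C1 A0 A2 by linarith

lemma AmodC: "A mod C = A" using A0 AC by simp

lemma fT_inj: "inj (fT C A)"
proof (rule injI)
  fix x y assume "fT C A x = fT C A y"
  then have "nat (C * int x + A) = nat (C * int y + A)" unfolding fT_def by simp
  then have "C * int x + A = C * int y + A" using C1 A0 by (simp add: nat_eq_iff2) 
  then show "x = y" using C1 by simp
qed

lemma fF_pos: "1 \<le> j \<Longrightarrow> 0 < C * int j - A"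
proof -
  assume "1 \<le> j"
  then have "C \<le> C * int j" using C1 by (simp add: mult_le_cancel_left1)
  then show ?thesis using AC by linarith
qed

lemma fF_inj: "inj_on (fF C A) {1..}"
proof (rule inj_onI)
  fix x y assume x: "x \<in> {1..}" and y: "y \<in> {1..}" and "fF C A x = fF C A y"
  then have "nat (C * int x - A) = nat (C * int y - A)" unfolding fF_def by simp
  moreover have "C * int x - A > 0" "C * int y - A > 0"
    using x y fF_pos by auto
  ultimately have "C * int x - A = C * int y - A" by (metis int_nat_eq less_le)
  then have "C * int x = C * int y" by simp
  then show "x = y" using C1 by simp
qed

lemma fT_in: "0 < C * int j + A \<Longrightarrow> fT C A j \<in> Rr C A"
  unfolding fT_def Rr_def using AmodC by (simp add: mod_mult_self3 algebra_simps)

lemma fF_in: "1 \<le> j \<Longrightarrow> fF C A j \<in> Rr C A"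
proof -
  assume j: "1 \<le> j"
  have p: "0 < C * int j - A" using fF_pos[OF j] .
  have "(C * int j - A) mod C = (- A) mod C"
    by (metis add.commute diff_conv_add_uminus mod_mult_self2 mult.commute)
  then show ?thesis unfolding fF_def Rr_def using p by simp
qed

lemma rinv_T: "(True, n) \<in> Rr C A \<Longrightarrow> fT C A (nat (int n div C)) = (True, n) \<and> 0 < C * int (nat (int n div C)) + A"
proof -
  assume a: "(True, n) \<in> Rr C A"
  have m: "int n mod C = A" and p: "0 < n" using a AmodC unfolding Rr_def by auto
  have nn: "0 \<le> int n div C" using C1 by (simp add: pos_imp_zdiv_nonneg_iff)
  have e: "C * (int n div C) + A = int n" using m by (metis mult_div_mod_eq)
  define j where "j = int n div C"
  have ij: "int (nat j) = j" using nn unfolding j_def by simp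
  have "C * int (nat j) + A = int n" using e ij unfolding j_def by simp
  then show ?thesis unfolding fT_def j_def[symmetric] using p by simp
qed

lemma rinv_F: "(False, n) \<in> Rr C A \<Longrightarrow> fF C A (nat ((int n + A) div C)) = (False, n) \<and> 1 \<le> nat ((int n + A) div C)"
proof -
  assume a: "(False, n) \<in> Rr C A"
  have m: "int n mod C = (- A) mod C" and p: "0 < n" using a unfolding Rr_def by auto
  have "(int n + A) mod C = ((-A) + A) mod C" using m by (metis mod_add_left_eq)
  then have z: "(int n + A) mod C = 0" by simp
  have e: "C * ((int n + A) div C) = int n + A" using z by (metis add.right_neutral mult_div_mod_eq)
  have pos: "1 \<le> (int n + A) div C"
  proof (rule ccontr)
    assume "\<not> 1 \<le> (int n + A) div C"
    then have "(int n + A) div C \<le> 0" by simp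
    then have "C * ((int n + A) div C) \<le> 0" using C1 by (simp add: mult_nonneg_nonpos)
    then show False using e p A0 by simp
  qed
  define j where "j = (int n + A) div C"
  have ij: "int (nat j) = j" using pos unfolding j_def by simp
  have "C * int (nat j) - A = int n" using e ij unfolding j_def by simp
  then have "nat (C * int (nat j) - A) = n" by simp
  then show ?thesis unfolding fF_def j_def[symmetric] using pos unfolding j_def by simp
qed

lemma Xplus_diff: "{j\<in>X. \<not> 0 < C * int j + A} = (if A = 0 \<and> 0 \<in> X then {0} else {})"
proof -
  have "\<not> 0 < C * int j + A \<longleftrightarrow> A = 0 \<and> j = 0" for j
  proof
    assume a: "\<not> 0 < C * int j + A"
    have "0 \<le> C * int j" using C1 by simp
    then have "A = 0" "C * int j = 0" using a A0 by linarith+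
    then show "A = 0 \<and> j = 0" using C1 by simp
  qed simp
  then show ?thesis by auto
qed

lemma rho_in: "q \<in> XY \<Longrightarrow> rho C A q \<in> Cod C A"
proof -
  assume q: "q \<in> XY"
  obtain X Y where qq: "q = (X,Y)" by force
  have f: "finite X" "finite Y" "0 \<notin> Y" using q unfolding qq XY_def by auto
  have "fT C A ` {j\<in>X. 0 < C * int j + A} \<subseteq> Rr C A" using fT_in by auto
  moreover have "fF C A ` Y \<subseteq> Rr C A"
  proof
    fix v assume "v \<in> fF C A ` Y"
    then obtain j where "j \<in> Y" "v = fF C A j" by auto
    moreover then have "1 \<le> j" using f(3) by (cases j) auto
    ultimately show "v \<in> Rr C A" using fF_in by simp
  qed
  ultimately show ?thesis unfolding qq rho_def Cod_def using f by auto
qed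

lemma fT_rinv: "nat (int (snd (fT C A j)) div C) = j"
proof -
  have "0 \<le> C * int j + A" using C1 A0 by simp
  then have "int (snd (fT C A j)) = C * int j + A" unfolding fT_def by simp
  moreover have "(C * int j + A) div C = int j" using C1 A0 AC by simp
  ultimately show ?thesis by simp
qed

lemma fF_rinv: "1 \<le> j \<Longrightarrow> nat ((int (snd (fF C A j)) + A) div C) = j"
proof -
  assume j: "1 \<le> j"
  have "int (snd (fF C A j)) = C * int j - A" unfolding fF_def using fF_pos[OF j] by simp
  then have "int (snd (fF C A j)) + A = C * int j" by simp
  then show ?thesis using C1 by simp
qed

lemma rinv_rho: "q \<in> XY \<Longrightarrow> rinv C A (rho C A q) = q"
proof -
  assume q: "q \<in> XY"
  obtain X Y where qq: "q = (X,Y)" by force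
  have f: "finite X" "finite Y" "0 \<notin> Y" using q unfolding qq XY_def by auto
  have Y1: "\<forall>j\<in>Y. 1 \<le> j" using f(3) by (metis less_one not_less)
  define V where "V = fT C A ` {j\<in>X. 0 < C * int j + A} \<union> fF C A ` Y"
  have VT: "{n. (True,n) \<in> V} = snd ` fT C A ` {j\<in>X. 0 < C * int j + A}"
    unfolding V_def fT_def fF_def by force
  have VF: "{n. (False,n) \<in> V} = snd ` fF C A ` Y"
    unfolding V_def fT_def fF_def by force
  have e1: "(\<lambda>n. nat (int n div C)) ` {n. (True,n) \<in> V} = {j\<in>X. 0 < C * int j + A}"
    unfolding VT image_image fT_rinv by simp
  have e2: "(\<lambda>n. nat ((int n + A) div C)) ` {n. (False,n) \<in> V} = Y"
    unfolding VF image_image using fF_rinv Y1 by simp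
  have e3: "{j\<in>X. 0 < C * int j + A} \<union> (if A = 0 \<and> 0 \<in> X then {0} else {}) = X"
    using Xplus_diff by blast
  have r: "rho C A (X,Y) = (V, A = 0 \<and> 0 \<in> X)" unfolding rho_def V_def by simp
  have "rinv C A (V, A = 0 \<and> 0 \<in> X) = ((\<lambda>n. nat (int n div C)) ` {n. (True,n) \<in> V} \<union> (if A = 0 \<and> 0 \<in> X then {0} else {}),
                        (\<lambda>n. nat ((int n + A) div C)) ` {n. (False,n) \<in> V})"
    unfolding rinv_def by simp
  also have "\<dots> = (X,Y)" unfolding e1 e2 e3 ..
  finally show ?thesis unfolding qq r .
qed

lemma rho_rinv: "p \<in> Cod C A \<Longrightarrow> rinv C A p \<in> XY \<and> rho C A (rinv C A p) = p"
proof -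
  assume p: "p \<in> Cod C A"
  obtain V k where pp: "p = (V,k)" by force
  have fV: "finite V" and VR: "V \<subseteq> Rr C A" and kA: "k \<longrightarrow> A = 0" using p unfolding pp Cod_def by auto
  define XT where "XT = (\<lambda>n. nat (int n div C)) ` {n. (True,n) \<in> V}"
  define X where "X = XT \<union> (if k then {0} else {})"
  define Y where "Y = (\<lambda>n. nat ((int n + A) div C)) ` {n. (False,n) \<in> V}"
  have ri: "rinv C A p = (X,Y)" unfolding pp rinv_def X_def XT_def Y_def by simp
  have "{n. (True,n) \<in> V} \<subseteq> snd ` V" by (auto intro: rev_image_eqI)
  then have fT: "finite {n. (True,n) \<in> V}" using fV finite_subset by blast
  have "{n. (False,n) \<in> V} \<subseteq> snd ` V" by (auto intro: rev_image_eqI)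
  then have fF: "finite {n. (False,n) \<in> V}" using fV finite_subset by blast
  have Y1: "\<forall>j\<in>Y. 1 \<le> j"
  proof
    fix j assume "j \<in> Y"
    then obtain n where "(False,n) \<in> V" "j = nat ((int n + A) div C)" unfolding Y_def by auto
    then show "1 \<le> j" using rinv_F VR by blast
  qed
  have "finite X" unfolding X_def XT_def using fT by simp
  moreover have "finite Y" unfolding Y_def using fF by simp
  moreover have "0 \<notin> Y" using Y1 by (metis not_one_le_zero)
  ultimately have inXY: "(X,Y) \<in> XY" unfolding XY_def by simp
  have t1: "fT C A ` {j\<in>X. 0 < C * int j + A} = {v\<in>V. fst v}"
  proof
    show "fT C A ` {j\<in>X. 0 < C * int j + A} \<subseteq> {v\<in>V. fst v}"
    proof
      fix v assume "v \<in> fT C A ` {j\<in>X. 0 < C * int j + A}"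
      then obtain j where j: "j \<in> X" "0 < C * int j + A" "v = fT C A j" by auto
      have "j \<in> XT"
      proof (rule ccontr)
        assume "j \<notin> XT"
        then have "k" "j = 0" using j(1) unfolding X_def by (auto split: if_splits)
        then show False using kA j(2) by simp
      qed
      then obtain n where n: "(True,n) \<in> V" "j = nat (int n div C)" unfolding XT_def by auto
      then have "fT C A j = (True, n)" using rinv_T VR by blast
      then show "v \<in> {v\<in>V. fst v}" using n j by simp
    qed
  next
    show "{v\<in>V. fst v} \<subseteq> fT C A ` {j\<in>X. 0 < C * int j + A}"
    proof
      fix v assume v: "v \<in> {v\<in>V. fst v}"
      then obtain n where n: "v = (True,n)" "(True,n) \<in> V" by (cases v) auto
      have r: "fT C A (nat (int n div C)) = (True, n) \<and> 0 < C * int (nat (int n div C)) + A"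
        using rinv_T n(2) VR by blast
      have "nat (int n div C) \<in> X" unfolding X_def XT_def using n(2) by auto
      then show "v \<in> fT C A ` {j\<in>X. 0 < C * int j + A}" using r n(1) by force
    qed
  qed
  have t2: "fF C A ` Y = {v\<in>V. \<not> fst v}"
  proof
    show "fF C A ` Y \<subseteq> {v\<in>V. \<not> fst v}"
    proof
      fix v assume "v \<in> fF C A ` Y"
      then obtain n where n: "(False,n) \<in> V" "v = fF C A (nat ((int n + A) div C))" unfolding Y_def by auto
      then show "v \<in> {v\<in>V. \<not> fst v}" using rinv_F VR by fastforce
    qed
  next
    show "{v\<in>V. \<not> fst v} \<subseteq> fF C A ` Y"
    proof
      fix v assume v: "v \<in> {v\<in>V. \<not> fst v}"
      then obtain n where n: "v = (False,n)" "(False,n) \<in> V" by (cases v) auto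
      have r: "fF C A (nat ((int n + A) div C)) = (False, n)"
        using rinv_F n(2) VR by blast
      have "nat ((int n + A) div C) \<in> Y" unfolding Y_def using n(2) by auto
      then show "v \<in> fF C A ` Y" using r n(1) by force
    qed
  qed
  have t3: "(A = 0 \<and> 0 \<in> X) = k"
  proof
    assume a: "A = 0 \<and> 0 \<in> X"
    show k
    proof (rule ccontr)
      assume "\<not> k"
      then have "0 \<in> XT" using a unfolding X_def by simp
      then obtain n where n: "(True,n) \<in> V" "0 = nat (int n div C)" unfolding XT_def by auto
      then have "0 < C * int 0 + A" using rinv_T VR by (metis subsetD)
      then show False using a by simp
    qed
  next
    assume k then show "A = 0 \<and> 0 \<in> X" using kA unfolding X_def by simp
  qed
  have "V = {v\<in>V. fst v} \<union> {v\<in>V. \<not> fst v}" by auto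
  then have rr: "rho C A (X,Y) = (V,k)" unfolding rho_def using t1 t2 t3 by simp
  show ?thesis using ri inXY rr pp by simp
qed

lemma rho_bij: "bij_betw (rho C A) XY (Cod C A)"
proof (rule bij_betw_byWitness[where f' = "rinv C A"])
  show "\<forall>a\<in>XY. rinv C A (rho C A a) = a" using rinv_rho by blast
  show "\<forall>a'\<in>Cod C A. rho C A (rinv C A a') = a'" using rho_rinv by blast
  show "rho C A ` XY \<subseteq> Cod C A" using rho_in by blast
  show "rinv C A ` Cod C A \<subseteq> XY" using rho_rinv by blast
qed

end

context
  fixes C A :: int
  assumes C1: "1 \<le> C" and A0: "0 \<le> A" and A2: "2 * A \<le> C"
begin

lemma rho_stats:
  assumes q: "(X,Y) \<in> XY" and r: "rho C A (X,Y) = (V,k)"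
  shows "int (\<Sum>v\<in>V. snd v) = C * int (\<Sum>X + \<Sum>Y) + A * (int (card X) - int (card Y))
     \<and> int (card V) + (if k then 1 else 0) = int (card X) + int (card Y)"
proof -
  have f: "finite X" "finite Y" "0 \<notin> Y" using q unfolding XY_def by auto
  define XP where "XP = {j\<in>X. 0 < C * int j + A}"
  have "rho C A (X,Y) = (fT C A ` XP \<union> fF C A ` Y, A = 0 \<and> 0 \<in> X)"
    unfolding rho_def XP_def by simp
  then have V: "V = fT C A ` XP \<union> fF C A ` Y" and k: "k = (A = 0 \<and> 0 \<in> X)"
    using r by simp_all
  have fXP: "finite XP" unfolding XP_def using f by simp
  have Y1: "Y \<subseteq> {1..}" using f(3) by (auto simp: Suc_le_eq) (metis gr0I)
  have injT: "inj_on (fT C A) XP" using fT_inj[OF C1 A0 A2] by (rule inj_on_subset) simp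
  have injF: "inj_on (fF C A) Y" using fF_inj[OF C1 A0 A2] Y1 by (rule inj_on_subset)
  have disj: "fT C A ` XP \<inter> fF C A ` Y = {}" unfolding fT_def fF_def by auto
  have cV: "card V = card XP + card Y"
    unfolding V using card_Un_disjoint[OF finite_imageI[OF fXP] finite_imageI[OF f(2)] disj]
      card_image[OF injT] card_image[OF injF] by simp
  have XPd: "{j\<in>X. \<not> 0 < C * int j + A} = (if A = 0 \<and> 0 \<in> X then {0} else {})"
    using Xplus_diff[OF C1 A0 A2] .
  have cX: "card X = card XP + (if A = 0 \<and> 0 \<in> X then 1 else 0)"
  proof -
    have "X = XP \<union> {j\<in>X. \<not> 0 < C * int j + A}" unfolding XP_def by auto
    moreover have "XP \<inter> {j\<in>X. \<not> 0 < C * int j + A} = {}" unfolding XP_def by auto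
    moreover have "finite {j\<in>X. \<not> 0 < C * int j + A}" using f(1) by simp
    ultimately have "card X = card XP + card {j\<in>X. \<not> 0 < C * int j + A}"
      using fXP card_Un_disjoint by metis
    then show ?thesis using XPd by simp
  qed
  have sV: "(\<Sum>v\<in>V. snd v) = (\<Sum>j\<in>XP. snd (fT C A j)) + (\<Sum>j\<in>Y. snd (fF C A j))"
    unfolding V sum.union_disjoint[OF finite_imageI[OF fXP] finite_imageI[OF f(2)] disj]
      sum.reindex[OF injT] sum.reindex[OF injF] comp_def ..
  have sT: "int (\<Sum>j\<in>XP. snd (fT C A j)) = C * int (\<Sum>X) + A * int (card X)"
  proof -
    have "int (\<Sum>j\<in>XP. snd (fT C A j)) = (\<Sum>j\<in>XP. C * int j + A)"
      unfolding of_nat_sum fT_def using C1 A0 by (intro sum.cong) auto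
    also have "\<dots> = (\<Sum>j\<in>X. C * int j + A)"
    proof (rule sum.mono_neutral_left[OF f(1)])
      show "XP \<subseteq> X" unfolding XP_def by auto
      show "\<forall>i\<in>X - XP. C * int i + A = 0"
      proof
        fix i assume "i \<in> X - XP"
        then have "i \<in> {j\<in>X. \<not> 0 < C * int j + A}" unfolding XP_def by simp
        then have "A = 0 \<and> i = 0" unfolding XPd by (simp split: if_splits)
        then show "C * int i + A = 0" by simp
      qed
    qed
    also have "\<dots> = C * (\<Sum>j\<in>X. int j) + A * int (card X)"
      by (simp only: sum.distrib sum_distrib_left[symmetric] sum_constant) simp
    also have "\<dots> = C * int (\<Sum>X) + A * int (card X)"
      by (simp only: of_nat_sum)
    finally show ?thesis .
  qed
  have sF: "int (\<Sum>j\<in>Y. snd (fF C A j)) = C * int (\<Sum>Y) - A * int (card Y)"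
  proof -
    have "int (\<Sum>j\<in>Y. snd (fF C A j)) = (\<Sum>j\<in>Y. C * int j - A)"
      unfolding of_nat_sum fF_def
    proof (intro sum.cong refl)
      fix j assume "j \<in> Y"
      then have "1 \<le> j" using Y1 by auto
      then have "0 < C * int j - A" using fF_pos[OF C1 A0 A2] by blast
      then show "int (snd (False, nat (C * int j - A))) = C * int j - A" by simp
    qed
    also have "\<dots> = C * (\<Sum>j\<in>Y. int j) - A * int (card Y)"
      by (simp only: sum_subtractf sum_distrib_left[symmetric] sum_constant) simp
    also have "\<dots> = C * int (\<Sum>Y) - A * int (card Y)"
      by (simp only: of_nat_sum)
    finally show ?thesis .
  qed
  have "int (\<Sum>v\<in>V. snd v) = C * int (\<Sum>X + \<Sum>Y) + A * (int (card X) - int (card Y))"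
    using sV sT sF by (simp add: algebra_simps)
  moreover have "int (card V) + (if k then 1 else 0) = int (card X) + int (card Y)"
    using cV cX k by simp
  ultimately show ?thesis by simp
qed

end

definition beta :: "int \<Rightarrow> int \<Rightarrow> nat multiset \<times> int \<Rightarrow> (bool \<times> nat) set \<times> bool" where
 "beta C A p = rho C A (phi p)"

lemma beta_bij:
  assumes "1 \<le> C" "0 \<le> A" "2 * A \<le> C"
  shows "bij_betw (beta C A) PD (Cod C A)"
  unfolding beta_def using bij_betw_trans[OF phi_bij rho_bij[OF assms]] by (simp add: comp_def)

lemma beta_stats:
  assumes "1 \<le> C" "0 \<le> A" "2 * A \<le> C" and p: "(\<mu>, d) \<in> PD" and b: "beta C A (\<mu>, d) = (V, k)"
  shows "int (\<Sum>v\<in>V. snd v) = C * (int (sum_mset \<mu>) + binom2 d) + A * d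
     \<and> even (d - (int (card V) + (if k then 1 else 0)))"
proof -
  obtain X Y where xy: "phi (\<mu>, d) = (X,Y)" by force
  have in1: "(X,Y) \<in> XYd d (wt (\<mu>, d))" using phi_in[OF p] xy by simp
  then have XY: "(X,Y) \<in> XY" and cd: "int (card X) - int (card Y) = d"
    and w: "int (\<Sum>X + \<Sum>Y) = int (sum_mset \<mu>) + binom2 d"
    unfolding XYd_def XY_def wt_def by auto
  have r: "rho C A (X,Y) = (V,k)" using b xy unfolding beta_def by simp
  note st = rho_stats[OF assms(1-3) XY r]
  have "int (\<Sum>v\<in>V. snd v) = C * (int (sum_mset \<mu>) + binom2 d) + A * d"
    using st cd w by simp
  moreover have "d - (int (card V) + (if k then 1 else 0)) = - 2 * int (card Y)"
    using st cd by simp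
  ultimately show ?thesis by simp
qed

lemma even_sum_diff:
  fixes f g :: "nat \<Rightarrow> int"
  assumes "\<forall>i\<in>S. even (f i - g i)"
  shows "even (sum f S - sum g S)"
proof -
  have "sum f S - sum g S = (\<Sum>i\<in>S. f i - g i)" by (simp add: sum_subtractf)
  moreover have "even (\<Sum>i\<in>S. f i - g i)" using assms by (induction S rule: infinite_finite_induct) auto
  ultimately show ?thesis by simp
qed

definition TS :: "nat \<Rightarrow> (nat \<Rightarrow> int) \<Rightarrow> (nat \<Rightarrow> int) \<Rightarrow> int \<Rightarrow> ((nat \<Rightarrow> nat multiset) \<times> (nat \<Rightarrow> int)) set" where
 "TS t C A N = {(\<mu> :: nat \<Rightarrow> nat multiset, d :: nat \<Rightarrow> int).
      (\<forall>i. t \<le> i \<longrightarrow> \<mu> i = {#} \<and> d i = 0) \<and>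
      (\<forall>i<t. is_partition (\<mu> i)) \<and>
      odd (\<Sum>i<t. d i) \<and>
      (\<Sum>i<t. C i * int (sum_mset (\<mu> i))) + (\<Sum>i<t. C i * binom2 (d i)) + (\<Sum>i<t. A i * d i) = N}"

definition QF :: "nat \<Rightarrow> (nat \<Rightarrow> int) \<Rightarrow> (nat \<Rightarrow> int) \<Rightarrow> int \<Rightarrow> ((nat \<Rightarrow> (bool \<times> nat) set) \<times> (nat \<Rightarrow> bool)) set" where
 "QF t C A N = {(V,k). (\<forall>i. t \<le> i \<longrightarrow> V i = {} \<and> \<not> k i) \<and> (\<forall>i<t. (V i, k i) \<in> Cod (C i) (A i))
     \<and> odd (\<Sum>i<t. card (V i) + (if k i then 1 else 0)) \<and> (\<Sum>i<t. int (\<Sum>v\<in>V i. snd v)) = N}"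

definition Phi :: "nat \<Rightarrow> (nat \<Rightarrow> int) \<Rightarrow> (nat \<Rightarrow> int) \<Rightarrow> (nat \<Rightarrow> nat multiset) \<times> (nat \<Rightarrow> int) \<Rightarrow> (nat \<Rightarrow> (bool \<times> nat) set) \<times> (nat \<Rightarrow> bool)" where
 "Phi t C A = (\<lambda>(\<mu>,d). (\<lambda>i. if i < t then fst (beta (C i) (A i) (\<mu> i, d i)) else {},
                   \<lambda>i. i < t \<and> snd (beta (C i) (A i) (\<mu> i, d i))))"

definition Psi :: "nat \<Rightarrow> (nat \<Rightarrow> int) \<Rightarrow> (nat \<Rightarrow> int) \<Rightarrow> (nat \<Rightarrow> (bool \<times> nat) set) \<times> (nat \<Rightarrow> bool) \<Rightarrow> (nat \<Rightarrow> nat multiset) \<times> (nat \<Rightarrow> int)" where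
 "Psi t C A = (\<lambda>(V,k). (\<lambda>i. if i < t then fst (inv_into PD (beta (C i) (A i)) (V i, k i)) else {#},
                   \<lambda>i. if i < t then snd (inv_into PD (beta (C i) (A i)) (V i, k i)) else 0))"

context
  fixes t :: nat and C A :: "nat \<Rightarrow> int"
  assumes hyp: "\<forall>i<t. 1 \<le> C i \<and> 0 \<le> A i \<and> 2 * A i \<le> C i"
begin

lemma tuple_stats:
  assumes PDi: "\<forall>i<t. (\<mu> i, d i) \<in> PD" and bi: "\<forall>i<t. beta (C i) (A i) (\<mu> i, d i) = (V i, k i)"
  shows "(\<Sum>i<t. C i * int (sum_mset (\<mu> i))) + (\<Sum>i<t. C i * binom2 (d i)) + (\<Sum>i<t. A i * d i)
          = (\<Sum>i<t. int (\<Sum>v\<in>V i. snd v))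
     \<and> (odd (\<Sum>i<t. d i) \<longleftrightarrow> odd (\<Sum>i<t. card (V i) + (if k i then 1 else 0)))"
proof -
  have st: "\<And>i. i < t \<Longrightarrow> int (\<Sum>v\<in>V i. snd v) = C i * (int (sum_mset (\<mu> i)) + binom2 (d i)) + A i * d i
     \<and> even (d i - (int (card (V i)) + (if k i then 1 else 0)))"
    using beta_stats hyp PDi bi by blast
  have "(\<Sum>i<t. int (\<Sum>v\<in>V i. snd v)) = (\<Sum>i<t. C i * (int (sum_mset (\<mu> i)) + binom2 (d i)) + A i * d i)"
    using st by (intro sum.cong) auto
  also have "\<dots> = (\<Sum>i<t. C i * int (sum_mset (\<mu> i))) + (\<Sum>i<t. C i * binom2 (d i)) + (\<Sum>i<t. A i * d i)"
    by (simp add: sum.distrib distrib_left)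
  finally have 1: "(\<Sum>i<t. C i * int (sum_mset (\<mu> i))) + (\<Sum>i<t. C i * binom2 (d i)) + (\<Sum>i<t. A i * d i)
          = (\<Sum>i<t. int (\<Sum>v\<in>V i. snd v))" by simp
  have e: "even ((\<Sum>i<t. d i) - (\<Sum>i<t. int (card (V i)) + (if k i then 1 else 0)))"
    using st by (intro even_sum_diff) auto
  have "int (\<Sum>i<t. card (V i) + (if k i then 1 else 0)) = (\<Sum>i<t. int (card (V i)) + (if k i then 1 else 0))"
    unfolding of_nat_sum by (intro sum.cong) auto
  then have 2: "odd (\<Sum>i<t. d i) \<longleftrightarrow> odd (\<Sum>i<t. card (V i) + (if k i then 1 else 0))"
    using e by (metis (no_types, lifting) even_add even_of_nat_iff diff_add_cancel)
  show ?thesis using 1 2 by simp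
qed

lemma bij_i: "i < t \<Longrightarrow> bij_betw (beta (C i) (A i)) PD (Cod (C i) (A i))"
  using hyp beta_bij by blast

lemma Phi_bij: "bij_betw (Phi t C A) (TS t C A N) (QF t C A N)"
proof (rule bij_betw_byWitness[where f' = "Psi t C A"])
  show "\<forall>a\<in>TS t C A N. Psi t C A (Phi t C A a) = a"
  proof
    fix a assume a: "a \<in> TS t C A N"
    obtain \<mu> d where ad: "a = (\<mu>,d)" by force
    have z: "\<forall>i. t \<le> i \<longrightarrow> \<mu> i = {#} \<and> d i = 0" and pd: "\<forall>i<t. (\<mu> i, d i) \<in> PD"
      using a unfolding ad TS_def PD_def by auto
    have inv: "inv_into PD (beta (C i) (A i)) (beta (C i) (A i) (\<mu> i, d i)) = (\<mu> i, d i)" if "i < t" for i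
      using bij_i[OF that] pd that by (simp add: bij_betw_imp_inj_on inv_into_f_f)
    have "Psi t C A (Phi t C A a) = (\<mu>, d)"
      unfolding ad Phi_def Psi_def using inv z by (auto intro!: ext simp: not_less)
    then show "Psi t C A (Phi t C A a) = a" using ad by simp
  qed
next
  show "\<forall>b\<in>QF t C A N. Phi t C A (Psi t C A b) = b"
  proof
    fix b assume b: "b \<in> QF t C A N"
    obtain V k where bd: "b = (V,k)" by force
    have z: "\<forall>i. t \<le> i \<longrightarrow> V i = {} \<and> \<not> k i" and cd: "\<forall>i<t. (V i, k i) \<in> Cod (C i) (A i)"
      using b unfolding bd QF_def by auto
    have fi: "beta (C i) (A i) (inv_into PD (beta (C i) (A i)) (V i, k i)) = (V i, k i)" if "i < t" for i
      using bij_i[OF that] cd that by (metis bij_betw_inv_into_right)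
    have 1: "fst (Phi t C A (Psi t C A b)) i = V i" for i
      using fi[of i] z by (cases "i < t") (simp_all add: Phi_def Psi_def bd)
    have 2: "snd (Phi t C A (Psi t C A b)) i = k i" for i
      using fi[of i] z by (cases "i < t") (simp_all add: Phi_def Psi_def bd)
    have "fst (Phi t C A (Psi t C A b)) = V" "snd (Phi t C A (Psi t C A b)) = k" using 1 2 by auto
    then have "Phi t C A (Psi t C A b) = (V, k)" by (metis prod.collapse)
    then show "Phi t C A (Psi t C A b) = b" using bd by simp
  qed
next
  show "Phi t C A ` TS t C A N \<subseteq> QF t C A N"
  proof
    fix b assume "b \<in> Phi t C A ` TS t C A N"
    then obtain a where a: "a \<in> TS t C A N" and b: "b = Phi t C A a" by auto
    obtain \<mu> d where ad: "a = (\<mu>,d)" by force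
    have pd: "\<forall>i<t. (\<mu> i, d i) \<in> PD" and od: "odd (\<Sum>i<t. d i)"
      and sm: "(\<Sum>i<t. C i * int (sum_mset (\<mu> i))) + (\<Sum>i<t. C i * binom2 (d i)) + (\<Sum>i<t. A i * d i) = N"
      using a unfolding ad TS_def PD_def by auto
    define V where "V = (\<lambda>i. if i < t then fst (beta (C i) (A i) (\<mu> i, d i)) else {})"
    define k where "k = (\<lambda>i. i < t \<and> snd (beta (C i) (A i) (\<mu> i, d i)))"
    have bV: "b = (V,k)" unfolding b ad Phi_def V_def k_def by simp
    have bi: "\<forall>i<t. beta (C i) (A i) (\<mu> i, d i) = (V i, k i)" unfolding V_def k_def by simp
    have "\<forall>i<t. (V i, k i) \<in> Cod (C i) (A i)"
      using bi pd bij_i by (metis bij_betwE)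
    moreover have "\<forall>i. t \<le> i \<longrightarrow> V i = {} \<and> \<not> k i" unfolding V_def k_def by simp
    moreover note tuple_stats[OF pd bi]
    ultimately show "b \<in> QF t C A N" unfolding bV QF_def using od sm by simp
  qed
next
  show "Psi t C A ` QF t C A N \<subseteq> TS t C A N"
  proof
    fix a assume "a \<in> Psi t C A ` QF t C A N"
    then obtain b where b: "b \<in> QF t C A N" and a: "a = Psi t C A b" by auto
    obtain V k where bd: "b = (V,k)" by force
    have z: "\<forall>i. t \<le> i \<longrightarrow> V i = {} \<and> \<not> k i" and cd: "\<forall>i<t. (V i, k i) \<in> Cod (C i) (A i)"
      and od: "odd (\<Sum>i<t. card (V i) + (if k i then 1 else 0))" and sm: "(\<Sum>i<t. int (\<Sum>v\<in>V i. snd v)) = N"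
      using b unfolding bd QF_def by auto
    define \<mu> where "\<mu> = (\<lambda>i. if i < t then fst (inv_into PD (beta (C i) (A i)) (V i, k i)) else {#})"
    define d where "d = (\<lambda>i. if i < t then snd (inv_into PD (beta (C i) (A i)) (V i, k i)) else 0)"
    have ad: "a = (\<mu>, d)" unfolding a bd Psi_def \<mu>_def d_def by simp
    have pe: "(\<mu> i, d i) = inv_into PD (beta (C i) (A i)) (V i, k i)" if "i < t" for i
      unfolding \<mu>_def d_def using that by simp
    have pd: "\<forall>i<t. (\<mu> i, d i) \<in> PD"
      using pe cd bij_i by (metis bij_betw_def inv_into_into)
    have bi: "\<forall>i<t. beta (C i) (A i) (\<mu> i, d i) = (V i, k i)"
      using pe cd bij_i by (metis bij_betw_inv_into_right)
    note st = tuple_stats[OF pd bi]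
    have "\<forall>i. t \<le> i \<longrightarrow> \<mu> i = {#} \<and> d i = 0" unfolding \<mu>_def d_def by simp
    moreover have "\<forall>i<t. is_partition (\<mu> i)" using pd unfolding PD_def by auto
    ultimately show "a \<in> TS t C A N" unfolding ad TS_def using st od sm by simp
  qed
qed

end

definition Qs :: "nat \<Rightarrow> (nat \<Rightarrow> int) \<Rightarrow> (nat \<Rightarrow> int) \<Rightarrow> int \<Rightarrow> ((nat \<times> bool \<times> nat) set \<times> nat set) set" where
 "Qs t C A N = {(W,K). W \<subseteq> res_mset t C A \<and> finite W \<and> int (\<Sum>x\<in>W. snd (snd x)) = N
     \<and> K \<subseteq> {i. i < t \<and> A i = 0} \<and> odd (card W + card K)}"

definition Sg :: "nat \<Rightarrow> (nat \<Rightarrow> (bool \<times> nat) set) \<times> (nat \<Rightarrow> bool) \<Rightarrow> (nat \<times> bool \<times> nat) set \<times> nat set" where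
 "Sg t = (\<lambda>(V,k). (Sigma {..<t} V, {i. i < t \<and> k i}))"
definition Sg' :: "nat \<Rightarrow> (nat \<times> bool \<times> nat) set \<times> nat set \<Rightarrow> (nat \<Rightarrow> (bool \<times> nat) set) \<times> (nat \<Rightarrow> bool)" where
 "Sg' t = (\<lambda>(W,K). (\<lambda>i. if i < t then {v. (i,v) \<in> W} else {}, \<lambda>i. i \<in> K))"

lemma res_Sigma: "res_mset t C A = Sigma {..<t} (\<lambda>i. Rr (C i) (A i))"
  unfolding res_mset_def Rr_def by auto

lemma Sg_stats:
  fixes t :: nat and V :: "nat \<Rightarrow> (bool \<times> nat) set" and k :: "nat \<Rightarrow> bool"
  assumes fin: "\<forall>i<t. finite (V i)"
  shows "(\<Sum>x\<in>Sigma {..<t} V. snd (snd x)) = (\<Sum>i<t. \<Sum>v\<in>V i. snd v)"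
    and "card (Sigma {..<t} V) + card {i. i < t \<and> k i} = (\<Sum>i<t. card (V i) + (if k i then 1 else 0))"
proof -
  have "(\<Sum>i<t. \<Sum>v\<in>V i. snd v) = (\<Sum>(i,v)\<in>Sigma {..<t} V. snd v)"
    by (rule sum.Sigma) (use fin in auto)
  then show "(\<Sum>x\<in>Sigma {..<t} V. snd (snd x)) = (\<Sum>i<t. \<Sum>v\<in>V i. snd v)"
    by (simp add: case_prod_beta)
  have c1: "card (Sigma {..<t} V) = (\<Sum>i<t. card (V i))" using fin by (simp add: card_SigmaI)
  have "card {i. i < t \<and> k i} = card {i\<in>{..<t}. k i}" by (metis lessThan_iff)
  also have "\<dots> = (\<Sum>i\<in>{i\<in>{..<t}. k i}. 1)" by simp
  also have "\<dots> = (\<Sum>i<t. if k i then 1 else 0)" by (rule sum.inter_filter) simp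
  finally show "card (Sigma {..<t} V) + card {i. i < t \<and> k i} = (\<Sum>i<t. card (V i) + (if k i then 1 else 0))"
    using c1 by (simp add: sum.distrib)
qed

lemma Sg_bij: "bij_betw (Sg t) (QF t C A N) (Qs t C A N)"
proof (rule bij_betw_byWitness[where f' = "Sg' t"])
  show "\<forall>a\<in>QF t C A N. Sg' t (Sg t a) = a"
  proof
    fix a assume a: "a \<in> QF t C A N"
    obtain V k where ad: "a = (V,k)" by force
    have z: "\<forall>i. t \<le> i \<longrightarrow> V i = {} \<and> \<not> k i" using a unfolding ad QF_def by auto
    have 1: "fst (Sg' t (Sg t a)) i = V i" for i using z by (cases "i < t") (auto simp: Sg_def Sg'_def ad)
    have 2: "snd (Sg' t (Sg t a)) i = k i" for i using z by (cases "i < t") (auto simp: Sg_def Sg'_def ad)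
    have "fst (Sg' t (Sg t a)) = V" "snd (Sg' t (Sg t a)) = k" using 1 2 by auto
    then show "Sg' t (Sg t a) = a" unfolding ad by (metis prod.collapse)
  qed
next
  show "\<forall>b\<in>Qs t C A N. Sg t (Sg' t b) = b"
  proof
    fix b assume b: "b \<in> Qs t C A N"
    obtain W K where bd: "b = (W,K)" by force
    have W: "W \<subseteq> res_mset t C A" and K: "K \<subseteq> {i. i < t \<and> A i = 0}" using b unfolding bd Qs_def by auto
    have "Sigma {..<t} (\<lambda>i. if i < t then {v. (i,v) \<in> W} else {}) = W"
      using W unfolding res_mset_def by auto
    moreover have "{i. i < t \<and> i \<in> K} = K" using K by auto
    ultimately show "Sg t (Sg' t b) = b" unfolding bd Sg_def Sg'_def by simp
  qed
next
  show "Sg t ` QF t C A N \<subseteq> Qs t C A N"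
  proof
    fix b assume "b \<in> Sg t ` QF t C A N"
    then obtain a where a: "a \<in> QF t C A N" and b: "b = Sg t a" by auto
    obtain V k where ad: "a = (V,k)" by force
    have cd: "\<forall>i<t. (V i, k i) \<in> Cod (C i) (A i)"
      and od: "odd (\<Sum>i<t. card (V i) + (if k i then 1 else 0))" and sm: "(\<Sum>i<t. int (\<Sum>v\<in>V i. snd v)) = N"
      using a unfolding ad QF_def by auto
    have fin: "\<forall>i<t. finite (V i)" and sub: "\<forall>i<t. V i \<subseteq> Rr (C i) (A i)" and kA: "\<forall>i<t. k i \<longrightarrow> A i = 0"
      using cd unfolding Cod_def by auto
    note st = Sg_stats(1)[OF fin] Sg_stats(2)[OF fin, of k]
    have "Sigma {..<t} V \<subseteq> res_mset t C A" unfolding res_Sigma using sub by auto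
    moreover have "finite (Sigma {..<t} V)" using fin by (intro finite_SigmaI) auto
    moreover have "int (\<Sum>x\<in>Sigma {..<t} V. snd (snd x)) = N" using st(1) sm by (simp add: of_nat_sum)
    moreover have "{i. i < t \<and> k i} \<subseteq> {i. i < t \<and> A i = 0}" using kA by auto
    moreover have "odd (card (Sigma {..<t} V) + card {i. i < t \<and> k i})" using st(2) od by simp
    ultimately show "b \<in> Qs t C A N" unfolding b ad Sg_def Qs_def by simp
  qed
next
  show "Sg' t ` Qs t C A N \<subseteq> QF t C A N"
  proof
    fix a assume "a \<in> Sg' t ` Qs t C A N"
    then obtain b where b: "b \<in> Qs t C A N" and a: "a = Sg' t b" by auto
    obtain W K where bd: "b = (W,K)" by force
    have W: "W \<subseteq> res_mset t C A" and fW: "finite W" and sm: "int (\<Sum>x\<in>W. snd (snd x)) = N"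
      and K: "K \<subseteq> {i. i < t \<and> A i = 0}" and od: "odd (card W + card K)"
      using b unfolding bd Qs_def by auto
    define V where "V = (\<lambda>i. if i < t then {v. (i,v) \<in> W} else {})"
    define k where "k = (\<lambda>i. i \<in> K)"
    have ad: "a = (V,k)" unfolding a bd Sg'_def V_def k_def by simp
    have fin: "\<forall>i<t. finite (V i)"
    proof (intro allI impI)
      fix i assume "i < t"
      have "{v. (i,v) \<in> W} \<subseteq> snd ` W" by (auto intro: rev_image_eqI)
      then show "finite (V i)" unfolding V_def using fW finite_subset by auto
    qed
    have SW: "Sigma {..<t} V = W" using W unfolding res_mset_def V_def by auto
    have KK: "{i. i < t \<and> k i} = K" using K unfolding k_def by auto
    note st = Sg_stats(1)[OF fin] Sg_stats(2)[OF fin, of k]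
    have "\<forall>i. t \<le> i \<longrightarrow> V i = {} \<and> \<not> k i" unfolding V_def k_def using K by auto
    moreover have "\<forall>i<t. (V i, k i) \<in> Cod (C i) (A i)"
    proof (intro allI impI)
      fix i assume i: "i < t"
      have "V i \<subseteq> Rr (C i) (A i)" using W i unfolding V_def res_mset_def Rr_def by auto
      moreover have "k i \<longrightarrow> A i = 0" using K unfolding k_def by auto
      ultimately show "(V i, k i) \<in> Cod (C i) (A i)" using fin i unfolding Cod_def by simp
    qed
    moreover have "odd (\<Sum>i<t. card (V i) + (if k i then 1 else 0))" using st(2) od SW KK by simp
    moreover have "(\<Sum>i<t. int (\<Sum>v\<in>V i. snd v)) = N" using st(1) sm SW by (simp add: of_nat_sum)
    ultimately show "a \<in> QF t C A N" unfolding ad QF_def by simp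
  qed
qed

definition Dall :: "nat \<Rightarrow> (nat \<Rightarrow> int) \<Rightarrow> (nat \<Rightarrow> int) \<Rightarrow> int \<Rightarrow> (nat \<times> bool \<times> nat) set set" where
 "Dall t C A N = {X. X \<subseteq> res_mset t C A \<and> finite X \<and> int (\<Sum>x\<in>X. snd (snd x)) = N}"

lemma card_Qs:
  "card (Qs t C A N) = 2 ^ (max (zero_count t A) 1 - 1) * D_count t C A N"
proof -
  define Z where "Z = {i. i < t \<and> A i = 0}"
  have fZ: "finite Z" unfolding Z_def by simp
  have zc: "zero_count t A = card Z" unfolding zero_count_def Z_def ..
  have QZ: "Qs t C A N = {(W,K). W \<in> Dall t C A N \<and> K \<subseteq> Z \<and> odd (card W + card K)}"
    unfolding Qs_def Dall_def Z_def by auto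
  show ?thesis
  proof (cases "Z = {}")
    case True
    then have nz: "\<forall>i<t. A i \<noteq> 0" unfolding Z_def by auto
    then have nzT: "(\<forall>i<t. A i \<noteq> 0) = True" by simp
    define D where "D = {W. W \<in> Dall t C A N \<and> odd (card W)}"
    have Dc: "D_count t C A N = card D" unfolding D_count_def D_def Dall_def mem_Collect_eq by (simp only: nzT simp_thms conj_assoc)
    have "Qs t C A N = (\<lambda>W. (W, {})) ` D" unfolding QZ D_def using True by auto
    then have "card (Qs t C A N) = card D" by (simp add: card_image inj_on_def)
    then show ?thesis using Dc zc True by simp
  next
    case False
    then obtain z0 where z0: "z0 \<in> Z" by auto
    have ex: "\<not> (\<forall>i<t. A i \<noteq> 0)" using z0 unfolding Z_def by auto
    then have exF: "(\<forall>i<t. A i \<noteq> 0) = False" by simp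
    have Dc: "D_count t C A N = card (Dall t C A N)" unfolding D_count_def Dall_def by (simp only: exF simp_thms)
    let ?f = "\<lambda>(W,K). (W, K - {z0})"
    let ?g = "\<lambda>(W,K'). (W, if odd (card W + card K') then K' else insert z0 K')"
    have bij: "bij_betw ?f (Qs t C A N) (Dall t C A N \<times> Pow (Z - {z0}))"
    proof (rule bij_betw_byWitness[where f' = ?g])
      show "\<forall>a\<in>Qs t C A N. ?g (?f a) = a"
      proof
        fix a assume "a \<in> Qs t C A N"
        then obtain W K where a: "a = (W,K)" and K: "K \<subseteq> Z" and od: "odd (card W + card K)"
          unfolding QZ by auto
        have fK: "finite K" using K fZ finite_subset by blast
        show "?g (?f a) = a"
        proof (cases "z0 \<in> K")
          case True
          then have "card K = Suc (card (K - {z0}))" using fK by (metis card_Suc_Diff1)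
          then have ev: "\<not> odd (card W + card (K - {z0}))" using od by simp
          have "?g (?f a) = (W, insert z0 (K - {z0}))" unfolding a by (simp only: case_prod_conv ev if_False)
          also have "(W, insert z0 (K - {z0})) = a" unfolding a using True by (simp add: insert_absorb)
          finally show ?thesis .
        next
          case False
          then show ?thesis unfolding a using od by simp
        qed
      qed
    next
      show "\<forall>b\<in>Dall t C A N \<times> Pow (Z - {z0}). ?f (?g b) = b" by auto
    next
      show "?f ` Qs t C A N \<subseteq> Dall t C A N \<times> Pow (Z - {z0})" unfolding QZ by auto
    next
      show "?g ` (Dall t C A N \<times> Pow (Z - {z0})) \<subseteq> Qs t C A N"
      proof
        fix a assume "a \<in> ?g ` (Dall t C A N \<times> Pow (Z - {z0}))"
        then obtain W K' where a: "a = ?g (W,K')" and W: "W \<in> Dall t C A N" and K': "K' \<subseteq> Z - {z0}" by auto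
        have fK: "finite K'" using K' fZ finite_subset by blast
        have "z0 \<notin> K'" using K' by auto
        then have "card (insert z0 K') = Suc (card K')" using fK by simp
        then show "a \<in> Qs t C A N" unfolding a QZ using W K' z0 by auto
      qed
    qed
    have "card (Qs t C A N) = card (Dall t C A N \<times> Pow (Z - {z0}))" using bij_betw_same_card[OF bij] .
    also have "\<dots> = card (Dall t C A N) * 2 ^ (card Z - 1)"
      by (simp add: card_cartesian_product card_Pow fZ z0)
    finally have cq: "card (Qs t C A N) = card (Dall t C A N) * 2 ^ (card Z - 1)" .
    have "card Z \<ge> 1" using False fZ by (simp add: Suc_leI card_gt_0_iff)
    then have "max (card Z) 1 = card Z" by simp
    then show ?thesis using cq Dc zc by simp
  qed
qed

lemma tuple_count_formula:
  assumes hyp: "\<forall>i<t. 1 \<le> C i \<and> 0 \<le> A i \<and> 2 * A i \<le> C i"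
  shows "tuple_count t C A N = 2 ^ (max (zero_count t A) 1 - 1) * D_count t C A N"
proof -
  have "tuple_count t C A N = card (TS t C A N)" unfolding tuple_count_def TS_def ..
  also have "\<dots> = card (QF t C A N)" using bij_betw_same_card[OF Phi_bij[OF hyp]] .
  also have "\<dots> = card (Qs t C A N)" using bij_betw_same_card[OF Sg_bij] .
  finally show ?thesis using card_Qs by simp
qed

lemma pow_eq_iff:
  fixes x y :: nat and a b :: nat
  assumes "a \<ge> 1" "b \<ge> 1"
  shows "(2 ^ (a - 1) * x = 2 ^ (b - 1) * y) \<longleftrightarrow>
         real x = (2::real) powi (int b - int a) * real y"
proof -
  have h: "(2::real) powi (int b - int a) = 2 ^ (b - 1) / 2 ^ (a - 1)"
  proof -
    have "int b - int a = int (b - 1) - int (a - 1)" using assms by simp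
    then have "(2::real) powi (int b - int a) = 2 powi (int (b - 1)) / 2 powi (int (a - 1))"
      by (simp add: power_int_diff)
    then show ?thesis by simp
  qed
  have "(2 ^ (a - 1) * x = 2 ^ (b - 1) * y) \<longleftrightarrow> real (2 ^ (a - 1) * x) = real (2 ^ (b - 1) * y)"
    by (simp only: of_nat_eq_iff)
  also have "\<dots> \<longleftrightarrow> (2::real) ^ (a - 1) * real x = 2 ^ (b - 1) * real y" by simp
  also have "\<dots> \<longleftrightarrow> real x = 2 ^ (b - 1) / 2 ^ (a - 1) * real y"
    by (simp add: field_simps)
  finally show ?thesis using h by simp
qed

theorem theorem2p3:
  fixes t :: nat and C A B :: "nat \<Rightarrow> int" and m N0 :: int
  assumes "t \<ge> 1"
    and "\<forall>i<t. C i \<ge> 1"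
    and "\<forall>i<t. 0 \<le> A i \<and> 2 * A i \<le> C i"
    and "\<forall>i<t. 0 \<le> B i \<and> 2 * B i \<le> C i"
    and "m \<ge> 0" and "N0 \<ge> 1"
  shows "(\<forall>N\<ge>N0. tuple_count t C A N = tuple_count t C B (N - m))
     \<longleftrightarrow> (\<forall>N\<ge>N0. real (D_count t C A N) =
           (2::real) powi (int (max (zero_count t B) 1) - int (max (zero_count t A) 1))
           * real (D_count t C B (N - m)))"
proof -
  have hA: "\<forall>i<t. 1 \<le> C i \<and> 0 \<le> A i \<and> 2 * A i \<le> C i" using assms(2,3) by auto
  have hB: "\<forall>i<t. 1 \<le> C i \<and> 0 \<le> B i \<and> 2 * B i \<le> C i" using assms(2,4) by auto
  have pt: "tuple_count t C A N = tuple_count t C B (N - m) \<longleftrightarrow>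
      real (D_count t C A N) =
           (2::real) powi (int (max (zero_count t B) 1) - int (max (zero_count t A) 1))
           * real (D_count t C B (N - m))" for N
    unfolding tuple_count_formula[OF hA] tuple_count_formula[OF hB]
    by (rule pow_eq_iff) auto
  show ?thesis using pt by simp
qed

end
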